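(* Let $(\mathcal S,\mathcal A,P,r)$ be any finite MDP (general/multichain) and $(g^\star,h^\star)$ a solution of the modified Bellman equations. Let $V^0\in\mathbb R^n$, let $\lambda_{k+1}\le\lambda_k<1$ for $k\ge1$ with $\lim_k\lambda_k=0$, set $\lambda_0=1$, let $V^k=\lambda_kV^0+(1-\lambda_k)TV^{k-1}$ for $k\ge1$, and let $\pi_k$ be greedy policies, $T^{\pi_k}V^k=TV^k$. Then there exists an integer $K\ge0$ such that $\mathcal P^{\pi_k}g^\star=g^\star$ for all $k\ge K$; taking $K$ to be the minimal such integer, for every $k>K$, \[\|g^\star-g^{\pi_k}\|_\infty\le\|TV^k-V^k-g^\star\|_\infty\le2\Big(1-\sum_{i=1}^k\lambda_i\prod_{j=i}^k(1-\lambda_j)\Big)\|V^0-h^\star\|_\infty+2\prod_{j=K}^k(1-\lambda_j)\,\|g^\star\|_\infty.\]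
   Context: An MDP $(\mathcal S,\mathcal A,P,r)$ has finite state space $\mathcal S$ ($|\mathcal S|=n$, functions identified with $\mathbb R^n$), finite action space, transition probabilities $P(s'\mid s,a)$ and bounded reward $r$. For a policy $\pi$: $r^\pi(s)=\sum_a\pi(a\mid s)r(s,a)$, $\mathcal P^\pi(s,s')=\sum_a\pi(a\mid s)P(s'\mid s,a)$, $g^\pi(s)=\liminf_{T\to\infty}\frac1T\mathbb E_\pi[\sum_{t=0}^{T-1}r(s_t,a_t)\mid s_0=s]$, $g^\star=\max_\pi g^\pi$. $T^\pi V=r^\pi+\mathcal P^\pi V$, $(TV)(s)=\max_a\{r(s,a)+\sum_{s'}P(s'\mid s,a)V(s')\}$. A pair $(g,h)$ solves the modified Bellman equations if $\max_a\sum_{s'}P(s'\mid s,a)g(s')=g(s)$ and $\max_a\{r(s,a)+\sum_{s'}P(s'\mid s,a)h(s')\}=h(s)+g(s)$ for all $s$, with some policy attaining both maxima simultaneously; the first component of any solution equals $g^\star$. The convention $\lambda_0=1$ is the paper's. *)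

theory Defs
  imports "HOL-Analysis.Analysis"
begin

definition is_mdp :: "('s::finite \<Rightarrow> 'a::finite \<Rightarrow> 's \<Rightarrow> real) \<Rightarrow> bool" where
  "is_mdp P \<longleftrightarrow> (\<forall>s a s'. 0 \<le> P s a s') \<and> (\<forall>s a. (\<Sum>s'\<in>UNIV. P s a s') = 1)"

text \<open>Stationary (possibly randomized) Markov policies pol s a = pol(a|s).\<close>
definition is_policy :: "('s::finite \<Rightarrow> 'a::finite \<Rightarrow> real) \<Rightarrow> bool" where
  "is_policy pol \<longleftrightarrow> (\<forall>s a. 0 \<le> pol s a) \<and> (\<forall>s. (\<Sum>a\<in>UNIV. pol s a) = 1)"

definition r_pi :: "('s::finite \<Rightarrow> 'a::finite \<Rightarrow> real) \<Rightarrow> ('s \<Rightarrow> 'a \<Rightarrow> real) \<Rightarrow> 's \<Rightarrow> real" where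
  "r_pi r pol s = (\<Sum>a\<in>UNIV. pol s a * r s a)"

definition P_pi :: "('s::finite \<Rightarrow> 'a::finite \<Rightarrow> 's \<Rightarrow> real) \<Rightarrow> ('s \<Rightarrow> 'a \<Rightarrow> real) \<Rightarrow> ('s \<Rightarrow> real) \<Rightarrow> 's \<Rightarrow> real" where
  "P_pi P pol V s = (\<Sum>s'\<in>UNIV. (\<Sum>a\<in>UNIV. pol s a * P s a s') * V s')"

definition T_pi :: "('s::finite \<Rightarrow> 'a::finite \<Rightarrow> 's \<Rightarrow> real) \<Rightarrow> ('s \<Rightarrow> 'a \<Rightarrow> real) \<Rightarrow> ('s \<Rightarrow> 'a \<Rightarrow> real) \<Rightarrow> ('s \<Rightarrow> real) \<Rightarrow> 's \<Rightarrow> real" where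
  "T_pi P r pol V s = r_pi r pol s + P_pi P pol V s"

definition T_opt :: "('s::finite \<Rightarrow> 'a::finite \<Rightarrow> 's \<Rightarrow> real) \<Rightarrow> ('s \<Rightarrow> 'a \<Rightarrow> real) \<Rightarrow> ('s \<Rightarrow> real) \<Rightarrow> 's \<Rightarrow> real" where
  "T_opt P r V s = (MAX a\<in>UNIV. r s a + (\<Sum>s'\<in>UNIV. P s a s' * V s'))"

text \<open>Gain of a stationary policy: for a stationary Markov policy,
  E_pi[r(s_t,a_t) | s_0 = s] = ((P^pol)^t r^pol)(s), so
  g^pol(s) = liminf_T (1/T) sum_{t<T} ((P^pol)^t r^pol)(s).\<close>
definition gain :: "('s::finite \<Rightarrow> 'a::finite \<Rightarrow> 's \<Rightarrow> real) \<Rightarrow> ('s \<Rightarrow> 'a \<Rightarrow> real) \<Rightarrow> ('s \<Rightarrow> 'a \<Rightarrow> real) \<Rightarrow> 's \<Rightarrow> real" where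
  "gain P r pol s = real_of_ereal (liminf (\<lambda>T::nat. ereal
      ((1 / real T) * (\<Sum>t<T. ((P_pi P pol ^^ t) (r_pi r pol)) s))))"

definition modified_bellman :: "('s::finite \<Rightarrow> 'a::finite \<Rightarrow> 's \<Rightarrow> real) \<Rightarrow> ('s \<Rightarrow> 'a \<Rightarrow> real) \<Rightarrow> ('s \<Rightarrow> real) \<Rightarrow> ('s \<Rightarrow> real) \<Rightarrow> bool" where
  "modified_bellman P r g h \<longleftrightarrow>
     (\<forall>s. (MAX a\<in>UNIV. (\<Sum>s'\<in>UNIV. P s a s' * g s')) = g s) \<and>
     (\<forall>s. (MAX a\<in>UNIV. r s a + (\<Sum>s'\<in>UNIV. P s a s' * h s')) = h s + g s) \<and>
     (\<exists>d::'s \<Rightarrow> 'a. \<forall>s. (\<Sum>s'\<in>UNIV. P s (d s) s' * g s') = g s \<and>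
                      r s (d s) + (\<Sum>s'\<in>UNIV. P s (d s) s' * h s') = h s + g s)"

definition supnorm :: "('s::finite \<Rightarrow> real) \<Rightarrow> real" where
  "supnorm v = (MAX s\<in>UNIV. \<bar>v s\<bar>)"

end

theory Submission
  imports Defs
begin


definition Qf :: "('s::finite \<Rightarrow> 'a::finite \<Rightarrow> 's \<Rightarrow> real) \<Rightarrow> ('s \<Rightarrow> 'a \<Rightarrow> real) \<Rightarrow> ('s \<Rightarrow> real) \<Rightarrow> 's \<Rightarrow> 'a \<Rightarrow> real" where
  "Qf P r V s a = r s a + (\<Sum>s'\<in>UNIV. P s a s' * V s')"

lemma Topt_Qf: "T_opt P r V s = (MAX a\<in>UNIV. Qf P r V s a)"
  unfolding T_opt_def Qf_def ..

lemma Ppi_eq: "P_pi P pol V s = (\<Sum>a\<in>UNIV. pol s a * (\<Sum>s'\<in>UNIV. P s a s' * V s'))"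
  unfolding P_pi_def sum_distrib_right sum_distrib_left
  by (subst sum.swap) (simp add: mult.assoc)

lemma Tpi_eq: "T_pi P r pol V s = (\<Sum>a\<in>UNIV. pol s a * Qf P r V s a)"
  unfolding T_pi_def r_pi_def Ppi_eq Qf_def
  by (simp add: distrib_left sum.distrib)

lemma Pa_le:
  assumes "is_mdp P" "\<And>s'. V s' \<le> u"
  shows "(\<Sum>s'\<in>UNIV. P s a s' * V s') \<le> u"
proof -
  have "(\<Sum>s'\<in>UNIV. P s a s' * V s') \<le> (\<Sum>s'\<in>UNIV. P s a s' * u)"
    using assms by (intro sum_mono mult_left_mono) (auto simp: is_mdp_def)
  also have "\<dots> = u" using assms(1) by (simp add: is_mdp_def sum_distrib_right[symmetric])
  finally show ?thesis .
qed

lemma Pa_ge: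
  assumes "is_mdp P" "\<And>s'. u \<le> V s'"
  shows "u \<le> (\<Sum>s'\<in>UNIV. P s a s' * V s')"
proof -
  have "(\<Sum>s'\<in>UNIV. P s a s' * u) \<le> (\<Sum>s'\<in>UNIV. P s a s' * V s')"
    using assms by (intro sum_mono mult_left_mono) (auto simp: is_mdp_def)
  moreover have "(\<Sum>s'\<in>UNIV. P s a s' * u) = u" using assms(1) by (simp add: is_mdp_def sum_distrib_right[symmetric])
  ultimately show ?thesis by simp
qed

lemma pol_avg_le:
  assumes "is_policy pol" "\<And>a. f a \<le> u"
  shows "(\<Sum>a\<in>UNIV. pol s a * f a) \<le> u"
proof -
  have "(\<Sum>a\<in>UNIV. pol s a * f a) \<le> (\<Sum>a\<in>UNIV. pol s a * u)"
    using assms by (intro sum_mono mult_left_mono) (auto simp: is_policy_def)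
  also have "\<dots> = u" using assms(1) by (simp add: is_policy_def sum_distrib_right[symmetric])
  finally show ?thesis .
qed

lemma pol_avg_ge:
  assumes "is_policy pol" "\<And>a. u \<le> f a"
  shows "u \<le> (\<Sum>a\<in>UNIV. pol s a * f a)"
proof -
  have "(\<Sum>a\<in>UNIV. pol s a * u) \<le> (\<Sum>a\<in>UNIV. pol s a * f a)"
    using assms by (intro sum_mono mult_left_mono) (auto simp: is_policy_def)
  moreover have "(\<Sum>a\<in>UNIV. pol s a * u) = u" using assms(1) by (simp add: is_policy_def sum_distrib_right[symmetric])
  ultimately show ?thesis by simp
qed

lemma Ppi_le:
  assumes "is_mdp P" "is_policy pol" "\<And>s'. V s' \<le> u"
  shows "P_pi P pol V s \<le> u"
  unfolding Ppi_eq using assms by (intro pol_avg_le Pa_le) auto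

lemma Ppi_ge:
  assumes "is_mdp P" "is_policy pol" "\<And>s'. u \<le> V s'"
  shows "u \<le> P_pi P pol V s"
  unfolding Ppi_eq using assms by (intro pol_avg_ge Pa_ge) auto

lemma Ppi_lin: "P_pi P pol (\<lambda>x. c * V x + d * W x) s = c * P_pi P pol V s + d * P_pi P pol W s"
  unfolding P_pi_def by (simp add: algebra_simps sum.distrib sum_distrib_left)

lemma Ppi_diff: "P_pi P pol (\<lambda>x. V x - W x) s = P_pi P pol V s - P_pi P pol W s"
  unfolding P_pi_def by (simp add: algebra_simps sum_subtractf)

lemma Ppi_add: "P_pi P pol (\<lambda>x. V x + W x) s = P_pi P pol V s + P_pi P pol W s"
  unfolding P_pi_def by (simp add: algebra_simps sum.distrib)

lemma Ppi_cmult: "P_pi P pol (\<lambda>x. c * V x) s = c * P_pi P pol V s"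
  unfolding P_pi_def by (simp add: algebra_simps sum_distrib_left)

lemma Tpi_diff: "T_pi P r pol V s - T_pi P r pol W s = P_pi P pol (\<lambda>x. V x - W x) s"
  unfolding T_pi_def Ppi_diff by simp

lemma Tpi_le_Topt:
  assumes "is_policy pol"
  shows "T_pi P r pol V s \<le> T_opt P r V s"
  unfolding Tpi_eq Topt_Qf using assms by (intro pol_avg_le) auto

lemma Topt_nonexp_le:
  assumes "is_mdp P" "\<And>x. V x - W x \<le> c"
  shows "T_opt P r V s \<le> T_opt P r W s + c"
proof -
  have "Qf P r V s a \<le> T_opt P r W s + c" for a
  proof -
    have "(\<Sum>s'\<in>UNIV. P s a s' * (V s' - W s')) \<le> c" using assms by (intro Pa_le) auto
    hence "Qf P r V s a \<le> Qf P r W s a + c"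
      unfolding Qf_def by (simp add: algebra_simps sum_subtractf)
    also have "Qf P r W s a \<le> T_opt P r W s" unfolding Topt_Qf by simp
    finally show ?thesis by simp
  qed
  thus ?thesis unfolding Topt_Qf[of P r V] by simp
qed

lemma Topt_nonexp:
  assumes "is_mdp P" "\<And>x. \<bar>V x - W x\<bar> \<le> c"
  shows "\<bar>T_opt P r V s - T_opt P r W s\<bar> \<le> c"
proof -
  have "T_opt P r V s \<le> T_opt P r W s + c" using assms by (intro Topt_nonexp_le) (auto simp: abs_le_iff)
  moreover have "T_opt P r W s \<le> T_opt P r V s + c" using assms by (intro Topt_nonexp_le) (auto simp: abs_le_iff)
  ultimately show ?thesis by simp
qed

lemma bell_facts:
  assumes "modified_bellman P r g h"
  shows "\<And>s a. (\<Sum>s'\<in>UNIV. P s a s' * g s') \<le> g s"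
    and "\<And>s a. r s a + (\<Sum>s'\<in>UNIV. P s a s' * h s') \<le> h s + g s"
    and "\<exists>d. \<forall>s. (\<Sum>s'\<in>UNIV. P s (d s) s' * g s') = g s \<and> r s (d s) + (\<Sum>s'\<in>UNIV. P s (d s) s' * h s') = h s + g s"
proof -
  fix s a
  have "(\<Sum>s'\<in>UNIV. P s a s' * g s') \<le> (MAX a\<in>UNIV. (\<Sum>s'\<in>UNIV. P s a s' * g s'))" by simp
  thus "(\<Sum>s'\<in>UNIV. P s a s' * g s') \<le> g s" using assms unfolding modified_bellman_def by metis
next
  fix s a
  have "r s a + (\<Sum>s'\<in>UNIV. P s a s' * h s') \<le> (MAX a\<in>UNIV. r s a + (\<Sum>s'\<in>UNIV. P s a s' * h s'))" by simp
  thus "r s a + (\<Sum>s'\<in>UNIV. P s a s' * h s') \<le> h s + g s" using assms unfolding modified_bellman_def by metis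
next
  show "\<exists>d. \<forall>s. (\<Sum>s'\<in>UNIV. P s (d s) s' * g s') = g s \<and> r s (d s) + (\<Sum>s'\<in>UNIV. P s (d s) s' * h s') = h s + g s"
    using assms unfolding modified_bellman_def by blast
qed

lemma Ppi_g_le:
  assumes "modified_bellman P r g h" "is_policy pol"
  shows "P_pi P pol g s \<le> g s"
  unfolding Ppi_eq using assms by (intro pol_avg_le bell_facts(1)) auto


lemma Topt_shift:
  assumes "modified_bellman P r g h" "is_mdp P" "0 \<le> c"
  shows "T_opt P r (\<lambda>x. h x + c * g x) s = h s + (c + 1) * g s"
proof -
  obtain d where d: "\<And>s. (\<Sum>s'\<in>UNIV. P s (d s) s' * g s') = g s"
     "\<And>s. r s (d s) + (\<Sum>s'\<in>UNIV. P s (d s) s' * h s') = h s + g s"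
    using bell_facts(3)[OF assms(1)] by blast
  have eq: "Qf P r (\<lambda>x. h x + c * g x) s a = (r s a + (\<Sum>s'\<in>UNIV. P s a s' * h s')) + c * (\<Sum>s'\<in>UNIV. P s a s' * g s')" for a
  proof -
    have "(\<Sum>s'\<in>UNIV. P s a s' * (h s' + c * g s')) = (\<Sum>s'\<in>UNIV. P s a s' * h s' + c * (P s a s' * g s'))"
      by (rule sum.cong) (auto simp: algebra_simps)
    also have "\<dots> = (\<Sum>s'\<in>UNIV. P s a s' * h s') + c * (\<Sum>s'\<in>UNIV. P s a s' * g s')"
      by (simp only: sum.distrib sum_distrib_left)
    finally show ?thesis unfolding Qf_def by simp
  qed
  have le: "Qf P r (\<lambda>x. h x + c * g x) s a \<le> h s + (c + 1) * g s" for a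
  proof -
    have "c * (\<Sum>s'\<in>UNIV. P s a s' * g s') \<le> c * g s"
      using bell_facts(1)[OF assms(1), of s a] assms(3) by (rule mult_left_mono)
    thus ?thesis unfolding eq using bell_facts(2)[OF assms(1), of s a] by (simp add: algebra_simps)
  qed
  have e2: "Qf P r (\<lambda>x. h x + c * g x) s (d s) = h s + (c + 1) * g s"
    unfolding eq d by (simp add: algebra_simps)
  have "Qf P r (\<lambda>x. h x + c * g x) s (d s) \<le> T_opt P r (\<lambda>x. h x + c * g x) s"
    unfolding Topt_Qf by (rule Max_ge) auto
  hence "h s + (c + 1) * g s \<le> T_opt P r (\<lambda>x. h x + c * g x) s" using e2 by simp
  moreover have "T_opt P r (\<lambda>x. h x + c * g x) s \<le> h s + (c + 1) * g s"
    unfolding Topt_Qf using le by (subst Max_le_iff) auto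
  ultimately show ?thesis by simp
qed



fun acoef :: "(nat \<Rightarrow> real) \<Rightarrow> nat \<Rightarrow> real" where
  "acoef lam 0 = 0"
| "acoef lam (Suc n) = (1 - lam (Suc n)) * (acoef lam n + 1)"

fun Bc :: "(nat \<Rightarrow> real) \<Rightarrow> nat \<Rightarrow> real" where
  "Bc lam 0 = 1"
| "Bc lam (Suc n) = (lam (Suc n))\<^sup>2 + (1 - lam (Suc n)) * Bc lam n"

lemma acoef_nonneg:
  assumes "\<And>n. lam n \<le> 1"
  shows "0 \<le> acoef lam n"
proof (induction n)
  case (Suc n) thus ?case using assms[of "Suc n"] by simp
qed simp

lemma acoef_mono:
  assumes "\<And>n. lam n \<le> 1" "\<And>n. lam (Suc n) \<le> lam n"
  shows "acoef lam n \<le> acoef lam (Suc n)"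
proof (induction n)
  case 0 thus ?case using assms(1)[where n=1] by simp
next
  case (Suc n)
  have a: "0 \<le> acoef lam (Suc n) + 1" using acoef_nonneg[where lam=lam and n="Suc n"] assms(1) by simp
  have "(1 - lam (Suc n)) * (acoef lam (Suc n) + 1) \<le> (1 - lam (Suc (Suc n))) * (acoef lam (Suc n) + 1)"
    using assms(2)[where n="Suc n"] a by (intro mult_right_mono) auto
  moreover have "(1 - lam (Suc n)) * (acoef lam n + 1) \<le> (1 - lam (Suc n)) * (acoef lam (Suc n) + 1)"
    using Suc.IH assms(1)[where n="Suc n"] by (intro mult_left_mono) auto
  ultimately show ?case by simp
qed

lemma acoef_step_le1:
  assumes "\<And>n. lam n \<le> 1" "\<And>n. 0 \<le> lam n"
  shows "acoef lam (Suc n) - acoef lam n \<le> 1"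
proof -
  have "0 \<le> lam (Suc n) * acoef lam n" using acoef_nonneg[where lam=lam] assms by simp
  thus ?thesis using assms(2)[where n="Suc n"] by (simp add: algebra_simps)
qed

lemma Bc_closed: "Bc lam k = 1 - (\<Sum>i=1..k. lam i * (\<Prod>j=i..k. (1 - lam j)))"
proof (induction k)
  case 0 thus ?case by simp
next
  case (Suc k)
  have "(\<Sum>i=1..Suc k. lam i * (\<Prod>j=i..Suc k. (1 - lam j)))
      = (\<Sum>i=1..k. lam i * (\<Prod>j=i..Suc k. (1 - lam j))) + lam (Suc k) * (1 - lam (Suc k))"
    by (simp add: sum.cl_ivl_Suc)
  also have "(\<Sum>i=1..k. lam i * (\<Prod>j=i..Suc k. (1 - lam j))) = (\<Sum>i=1..k. lam i * (\<Prod>j=i..k. (1 - lam j))) * (1 - lam (Suc k))"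
    unfolding sum_distrib_right
    by (rule sum.cong) (auto simp: prod.cl_ivl_Suc)
  finally have e: "(\<Sum>i=1..Suc k. lam i * (\<Prod>j=i..Suc k. (1 - lam j))) = (1 - Bc lam k) * (1 - lam (Suc k)) + lam (Suc k) * (1 - lam (Suc k))"
    using Suc.IH by simp
  show ?case unfolding e Bc.simps by (simp add: algebra_simps power2_eq_square)
qed



lemma abs_le_supnorm: "\<bar>v s\<bar> \<le> supnorm v"
  unfolding supnorm_def by (rule Max_ge) auto

lemma supnorm_le: "(\<And>s. \<bar>v s\<bar> \<le> c) \<Longrightarrow> supnorm v \<le> c"
  unfolding supnorm_def by (subst Max_le_iff) auto

lemma liminf_real_bound:
  fixes f :: "nat \<Rightarrow> real"
  assumes "\<And>e. 0 < e \<Longrightarrow> eventually (\<lambda>T. \<bar>f T - c\<bar> \<le> W + e) sequentially"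
  shows "\<bar>c - real_of_ereal (liminf (\<lambda>T. ereal (f T)))\<bar> \<le> W"
proof -
  define L where "L = liminf (\<lambda>T. ereal (f T))"
  have lo: "ereal (c - W - e) \<le> L" and hi: "L \<le> ereal (c + W + e)" if e: "0 < e" for e
  proof -
    have ev: "eventually (\<lambda>T. \<bar>f T - c\<bar> \<le> W + e) sequentially" using assms e by blast
    have "eventually (\<lambda>T. ereal (c - W - e) \<le> ereal (f T)) sequentially"
      by (rule eventually_mono[OF ev]) (simp add: abs_le_iff)
    thus "ereal (c - W - e) \<le> L" unfolding L_def by (rule Liminf_bounded)
    have "eventually (\<lambda>T. ereal (f T) \<le> ereal (c + W + e)) sequentially"
      by (rule eventually_mono[OF ev]) (simp add: abs_le_iff)
    hence "limsup (\<lambda>T. ereal (f T)) \<le> ereal (c + W + e)" by (rule Limsup_bounded)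
    moreover have "L \<le> limsup (\<lambda>T. ereal (f T))" unfolding L_def
      by (rule Liminf_le_Limsup) simp
    ultimately show "L \<le> ereal (c + W + e)" by (rule order_trans[rotated])
  qed
  obtain x where x: "L = ereal x"
  proof (cases L)
    case (real r) thus ?thesis using that by blast
  next
    case PInf thus ?thesis using hi[of 1] by simp
  next
    case MInf thus ?thesis using lo[of 1] by simp
  qed
  have "\<bar>c - x\<bar> \<le> W + e" if "0 < e" for e
  proof -
    have "c - W - e \<le> x" using lo[OF that] unfolding x by simp
    moreover have "x \<le> c + W + e" using hi[OF that] unfolding x by simp
    ultimately show ?thesis by (simp add: abs_le_iff)
  qed
  hence "\<bar>c - x\<bar> \<le> W" by (rule field_le_epsilon) auto
  thus ?thesis unfolding L_def[symmetric] x by simp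
qed


lemma Ppi_fun_add: "P_pi P pol (\<lambda>x. V x + W x) = (\<lambda>s. P_pi P pol V s + P_pi P pol W s)"
  using Ppi_add by blast
lemma Ppi_fun_diff: "P_pi P pol (\<lambda>x. V x - W x) = (\<lambda>s. P_pi P pol V s - P_pi P pol W s)"
  using Ppi_diff by blast

lemma it_add: "(P_pi P pol ^^ t) (\<lambda>x. V x + W x) = (\<lambda>s. (P_pi P pol ^^ t) V s + (P_pi P pol ^^ t) W s)"
  by (induction t) (simp_all add: Ppi_fun_add)
lemma it_diff: "(P_pi P pol ^^ t) (\<lambda>x. V x - W x) = (\<lambda>s. (P_pi P pol ^^ t) V s - (P_pi P pol ^^ t) W s)"
  by (induction t) (simp_all add: Ppi_fun_diff)
lemma it_fix: "P_pi P pol g = g \<Longrightarrow> (P_pi P pol ^^ t) g = g"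
  by (induction t) simp_all
lemma it_bound:
  assumes "is_mdp P" "is_policy pol" "\<And>x. \<bar>V x\<bar> \<le> c"
  shows "\<bar>(P_pi P pol ^^ t) V s\<bar> \<le> c"
proof (induction t arbitrary: s)
  case 0 thus ?case using assms by simp
next
  case (Suc t)
  have b: "(P_pi P pol ^^ t) V x \<le> c" "-c \<le> (P_pi P pol ^^ t) V x" for x
    using Suc[of x] by (simp_all add: abs_le_iff)
  have "P_pi P pol ((P_pi P pol ^^ t) V) s \<le> c"
    using b assms(1,2) by (intro Ppi_le) auto
  moreover have "-c \<le> P_pi P pol ((P_pi P pol ^^ t) V) s"
    using b assms(1,2) by (intro Ppi_ge) auto
  ultimately show ?case by simp
qed

lemma gain_bound:
  assumes mdp: "is_mdp P" and pol: "is_policy pol"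
    and Pg: "P_pi P pol g = g"
    and Tw: "\<And>s. T_pi P r pol V s = V s + g s + w s"
    and wb: "\<And>s. \<bar>w s\<bar> \<le> W"
  shows "\<bar>g s - gain P r pol s\<bar> \<le> W"
proof -
  define M where "M = P_pi P pol"
  have rpi: "r_pi r pol = (\<lambda>x. (V x + g x + w x) - M V x)"
    using Tw unfolding T_pi_def M_def by (intro ext) (simp add: algebra_simps)
  have trm: "(M ^^ t) (r_pi r pol) s = ((M ^^ t) V s - (M ^^ Suc t) V s) + g s + (M ^^ t) w s" for t
  proof -
    have "(M ^^ t) (r_pi r pol) s = (M ^^ t) V s + (M ^^ t) g s + (M ^^ t) w s - (M ^^ t) (M V) s"
      unfolding rpi M_def it_diff it_add by simp
    moreover have "(M ^^ t) (M V) = (M ^^ Suc t) V" by (simp add: funpow_Suc_right del: funpow.simps)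
    moreover have "(M ^^ t) g = g" unfolding M_def using Pg by (rule it_fix)
    ultimately show ?thesis by simp
  qed
  define Vn where "Vn = supnorm V"
  have Vb: "\<bar>(M ^^ t) V s\<bar> \<le> Vn" for t
    unfolding M_def Vn_def using mdp pol abs_le_supnorm by (intro it_bound) auto
  have wtb: "\<bar>(M ^^ t) w s\<bar> \<le> W" for t
    unfolding M_def using mdp pol wb by (intro it_bound) auto
  have sumeq: "(\<Sum>t<T. (M ^^ t) (r_pi r pol) s) = (V s - (M ^^ T) V s) + real T * g s + (\<Sum>t<T. (M ^^ t) w s)" for T
  proof -
    have "(\<Sum>t<T. (M ^^ t) (r_pi r pol) s) = (\<Sum>t<T. (M ^^ t) V s - (M ^^ Suc t) V s) + (\<Sum>t<T. g s) + (\<Sum>t<T. (M ^^ t) w s)"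
      unfolding trm by (simp add: sum.distrib)
    also have "(\<Sum>t<T. (M ^^ t) V s - (M ^^ Suc t) V s) = V s - (M ^^ T) V s"
      by (subst sum_lessThan_telescope'[where f="\<lambda>t. (M ^^ t) V s"]) simp
    finally show ?thesis by simp
  qed
  have bnd: "\<bar>(1 / real T) * (\<Sum>t<T. (M ^^ t) (r_pi r pol) s) - g s\<bar> \<le> W + 2 * Vn / real T" if T: "T \<ge> 1" for T
  proof -
    have Tp: "real T > 0" using T by simp
    have eq: "(1 / real T) * (\<Sum>t<T. (M ^^ t) (r_pi r pol) s) - g s = (V s - (M ^^ T) V s) / real T + (\<Sum>t<T. (M ^^ t) w s) / real T"
      unfolding sumeq using Tp by (simp add: field_simps)
    have b1: "\<bar>V s - (M ^^ T) V s\<bar> \<le> 2 * Vn" using Vb[of 0] Vb[of T] by simp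
    have b2: "\<bar>\<Sum>t<T. (M ^^ t) w s\<bar> \<le> real T * W"
    proof -
      have "\<bar>\<Sum>t<T. (M ^^ t) w s\<bar> \<le> (\<Sum>t<T. \<bar>(M ^^ t) w s\<bar>)" by (rule sum_abs)
      also have "\<dots> \<le> (\<Sum>t<T. W)" using wtb by (intro sum_mono) auto
      finally show ?thesis by simp
    qed
    have a1: "\<bar>(V s - (M ^^ T) V s) / real T\<bar> \<le> 2 * Vn / real T"
      using b1 Tp by (simp add: abs_divide divide_right_mono)
    have a2: "\<bar>(\<Sum>t<T. (M ^^ t) w s) / real T\<bar> \<le> W"
      using b2 Tp by (simp add: abs_divide pos_divide_le_eq mult.commute)
    show ?thesis unfolding eq using a1 a2 abs_triangle_ineq[of "(V s - (M ^^ T) V s) / real T" "(\<Sum>t<T. (M ^^ t) w s) / real T"] by linarith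
  qed
  have ev: "eventually (\<lambda>T. \<bar>(1 / real T) * (\<Sum>t<T. (M ^^ t) (r_pi r pol) s) - g s\<bar> \<le> W + e) sequentially" if e: "0 < e" for e
  proof -
    obtain N :: nat where N: "real N > 2 * Vn / e" using reals_Archimedean2 by blast
    have "\<bar>(1 / real T) * (\<Sum>t<T. (M ^^ t) (r_pi r pol) s) - g s\<bar> \<le> W + e" if T: "T \<ge> N + 1" for T
    proof -
      have Tp: "real T > 0" using T by simp
      have "0 \<le> Vn" unfolding Vn_def using abs_le_supnorm[of V s] by linarith
      have "2 * Vn / e < real T" using N T by linarith
      hence "2 * Vn < real T * e" using e by (simp add: divide_less_eq mult.commute)
      hence "2 * Vn / real T \<le> e" using Tp by (simp add: divide_le_eq mult.commute)
      thus ?thesis using bnd[of T] T by simp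
    qed
    thus ?thesis unfolding eventually_sequentially by blast
  qed
  have "\<bar>g s - real_of_ereal (liminf (\<lambda>T. ereal ((1 / real T) * (\<Sum>t<T. (M ^^ t) (r_pi r pol) s))))\<bar> \<le> W"
    by (rule liminf_real_bound) (use ev in blast)
  thus ?thesis unfolding gain_def M_def .
qed



lemma Ppi_split:
  "P_pi P pol (\<lambda>x. V x - W x) s = P_pi P pol (\<lambda>x. V x - W x - c * g x) s + c * P_pi P pol g s"
proof -
  have "(\<lambda>x. V x - W x) = (\<lambda>x. 1 * (V x - W x - c * g x) + c * g x)" by (simp add: algebra_simps)
  hence "P_pi P pol (\<lambda>x. V x - W x) s = P_pi P pol (\<lambda>x. 1 * (V x - W x - c * g x) + c * g x) s" by simp
  also have "\<dots> = 1 * P_pi P pol (\<lambda>x. V x - W x - c * g x) s + c * P_pi P pol g s" by (rule Ppi_lin)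
  finally show ?thesis by simp
qed

lemma id_up: "(l1 - l2) * (2 * R) + (1 - l1) * (2 * R * (B - l1)) = 2 * R * (l1\<^sup>2 + (1 - l1) * B - l2)" for l1 l2 R B :: real
  by (simp add: algebra_simps power2_eq_square)
lemma id_low1: "(l1 - l2) * (- 2 * R - (a1 + 1) * G) + (1 - l1) * (- 2 * R * (B - l1) - (a1 - a0) * G)
    = - 2 * R * (l1\<^sup>2 + (1 - l1) * B - l2) - (a2 - a1) * G"
  if "a2 = (1 - l2) * (a1 + 1)" "a1 = (1 - l1) * (a0 + 1)" for l1 l2 R B G a0 a1 a2 :: real
  unfolding that by (simp add: algebra_simps power2_eq_square)
lemma id_low2: "(l1 - l2) * (- 2 * R) + (1 - l1) * (- 2 * R * (B - l1) - 2 * c * G * p)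
    = - 2 * R * (l1\<^sup>2 + (1 - l1) * B - l2) - 2 * c * G * (p * (1 - l1))" for l1 l2 R B G c p :: real
  by (simp add: algebra_simps power2_eq_square)
lemma id_fin_up: "l * (2 * R) + (1 - l) * (2 * R * (B - l)) = 2 * R * (l\<^sup>2 + (1 - l) * B)" for l R B :: real
  by (simp add: algebra_simps power2_eq_square)
lemma id_fin_lo: "l * (- 2 * R) + (1 - l) * (- 2 * R * (B - l) - 2 * c * G * p) = - 2 * R * (l\<^sup>2 + (1 - l) * B) - 2 * c * G * (p * (1 - l))" for l R B c G p :: real
  by (simp add: algebra_simps power2_eq_square)
lemma conv_abs: "\<bar>l * x + (1 - l) * y\<bar> \<le> R" if "0 \<le> l" "l \<le> 1" "\<bar>x\<bar> \<le> R" "\<bar>y\<bar> \<le> R" for l x y R :: real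
proof -
  have "\<bar>l * x\<bar> \<le> l * R" using that by (simp add: abs_mult mult_left_mono)
  moreover have "\<bar>(1 - l) * y\<bar> \<le> (1 - l) * R" using that by (simp add: abs_mult mult_left_mono)
  moreover have "l * R + (1 - l) * R = R" by (simp add: algebra_simps)
  ultimately show ?thesis using abs_triangle_ineq[of "l * x" "(1 - l) * y"] by linarith
qed

lemma main_bounds:
  fixes P :: "'s::finite \<Rightarrow> 'a::finite \<Rightarrow> 's \<Rightarrow> real"
    and r :: "'s \<Rightarrow> 'a \<Rightarrow> real"
    and g h V0 :: "'s \<Rightarrow> real"
    and lam :: "nat \<Rightarrow> real"
    and V :: "nat \<Rightarrow> 's \<Rightarrow> real"
    and pols :: "nat \<Rightarrow> 's \<Rightarrow> 'a \<Rightarrow> real"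
  assumes mdp: "is_mdp P"
    and bell: "modified_bellman P r g h"
    and lam0: "lam 0 = 1"
    and lamle1: "\<And>n. lam n \<le> 1"
    and lamnn: "\<And>n. 0 \<le> lam n"
    and lammono: "\<And>n. lam (Suc n) \<le> lam n"
    and V0: "V 0 = V0"
    and Vs: "\<And>n. V (Suc n) = (\<lambda>s. lam (Suc n) * V0 s + (1 - lam (Suc n)) * T_opt P r (V n) s)"
    and pol_ok: "\<And>k. is_policy (pols k)"
    and greedy: "\<And>k. T_pi P r (pols k) (V k) = T_opt P r (V k)"
    and Kg: "\<And>k. k \<ge> K \<Longrightarrow> P_pi P (pols k) g = g"
  shows "\<And>k s. k > K \<Longrightarrow> \<bar>T_opt P r (V k) s - V k s - g s\<bar>
      \<le> 2 * Bc lam k * supnorm (\<lambda>s. V0 s - h s) + 2 * (\<Prod>j=K..k. (1 - lam j)) * supnorm g"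
proof -
  define TV where "TV n = T_opt P r (V n)" for n
  define A where "A = acoef lam"
  define R where "R = supnorm (\<lambda>s. V0 s - h s)"
  define G where "G = supnorm g"
  have R0: "\<bar>V0 s - h s\<bar> \<le> R" for s unfolding R_def by (rule abs_le_supnorm)
  have G0: "\<bar>g s\<bar> \<le> G" for s unfolding G_def by (rule abs_le_supnorm)
  have Rnn: "0 \<le> R" using R0[of undefined] by linarith
  have Gnn: "0 \<le> G" using G0[of undefined] by linarith
  have Ann: "0 \<le> A n" for n unfolding A_def using lamle1 by (rule acoef_nonneg)
  have Amono: "A n \<le> A (Suc n)" for n unfolding A_def using lamle1 lammono by (rule acoef_mono)
  have Astep: "A (Suc n) - A n \<le> 1" for n unfolding A_def using lamle1 lamnn by (rule acoef_step_le1)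
  have A0: "A 0 = 0" unfolding A_def by simp
  have AS: "A (Suc n) = (1 - lam (Suc n)) * (A n + 1)" for n unfolding A_def by simp
  have VS: "V (Suc n) s = lam (Suc n) * V0 s + (1 - lam (Suc n)) * TV n s" for n s
    unfolding TV_def using Vs by simp
  have TVc: "\<bar>TV n s - (h s + (A n + 1) * g s)\<bar> \<le> R" and E: "\<bar>V n s - (h s + A n * g s)\<bar> \<le> R" for n s
  proof -
    have E': "\<bar>V n s - (h s + A n * g s)\<bar> \<le> R" for s
    proof (induction n arbitrary: s)
      case 0 thus ?case using R0 by (simp add: V0 A0)
    next
      case (Suc n)
      have "\<bar>TV n s - T_opt P r (\<lambda>x. h x + A n * g x) s\<bar> \<le> R"
        unfolding TV_def using mdp Suc.IH by (intro Topt_nonexp) auto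
      hence t: "\<bar>TV n s - (h s + (A n + 1) * g s)\<bar> \<le> R"
        using Topt_shift[OF bell mdp Ann[of n]] by simp
      have eq: "V (Suc n) s - (h s + A (Suc n) * g s) = lam (Suc n) * (V0 s - h s) + (1 - lam (Suc n)) * (TV n s - (h s + (A n + 1) * g s))"
        unfolding VS AS by (simp add: algebra_simps)
      show ?case unfolding eq using lamnn[of "Suc n"] lamle1[of "Suc n"] R0[of s] t by (intro conv_abs) auto
    qed
    thus "\<bar>V n s - (h s + A n * g s)\<bar> \<le> R" .
    have "\<bar>TV n s - T_opt P r (\<lambda>x. h x + A n * g x) s\<bar> \<le> R"
      unfolding TV_def using mdp E' by (intro Topt_nonexp) auto
    thus "\<bar>TV n s - (h s + (A n + 1) * g s)\<bar> \<le> R"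
      using Topt_shift[OF bell mdp Ann[of n]] by simp
  qed
  have Xb: "\<bar>TV n s - V0 s - (A n + 1) * g s\<bar> \<le> 2 * R" for n s
  proof -
    have "TV n s - V0 s - (A n + 1) * g s = (TV n s - (h s + (A n + 1) * g s)) - (V0 s - h s)" by simp
    thus ?thesis using TVc[of n s] R0[of s] abs_triangle_ineq4[of "TV n s - (h s + (A n + 1) * g s)" "V0 s - h s"] by linarith
  qed
  have I1: "V 1 s - V 0 s - (A 1 - A 0) * g s = (1 - lam 1) * (TV 0 s - V0 s - (A 0 + 1) * g s)" for s
  proof -
    have A1: "A (Suc 0) = 1 - lam (Suc 0)" "A 1 = 1 - lam 1" using AS[of 0] A0 by simp_all
    show ?thesis by (simp add: VS V0 A0 A1 algebra_simps)
  qed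
  have I2: "V (Suc (Suc n)) s - V (Suc n) s - (A (Suc (Suc n)) - A (Suc n)) * g s
      = (lam (Suc n) - lam (Suc (Suc n))) * (TV (Suc n) s - V0 s - (A (Suc n) + 1) * g s)
        + (1 - lam (Suc n)) * (TV (Suc n) s - TV n s - (A (Suc n) - A n) * g s)" for n s
    unfolding VS AS[of "Suc n"] AS[of n] by (simp add: algebra_simps)
  have I2': "V (Suc (Suc n)) s - V (Suc n) s
      = (lam (Suc n) - lam (Suc (Suc n))) * (TV (Suc n) s - V0 s)
        + (1 - lam (Suc n)) * (TV (Suc n) s - TV n s)" for n s
    unfolding VS by (simp add: algebra_simps)
  have I3: "TV (Suc n) s - V (Suc n) s - g s
      = lam (Suc n) * (TV (Suc n) s - V0 s - (A (Suc n) + 1) * g s)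
        + (1 - lam (Suc n)) * (TV (Suc n) s - TV n s - (A (Suc n) - A n) * g s)" for n s
    unfolding VS AS[of n] by (simp add: algebra_simps)
  have Yup: "TV (Suc n) s - TV n s \<le> P_pi P (pols (Suc n)) (\<lambda>x. V (Suc n) x - V n x) s" for n s
  proof -
    have "T_pi P r (pols (Suc n)) (V n) s \<le> TV n s" unfolding TV_def using pol_ok by (rule Tpi_le_Topt)
    moreover have "TV (Suc n) s = T_pi P r (pols (Suc n)) (V (Suc n)) s" unfolding TV_def greedy ..
    ultimately show ?thesis using Tpi_diff[of P r "pols (Suc n)" "V (Suc n)" s "V n"] by simp
  qed
  have Ylo: "P_pi P (pols n) (\<lambda>x. V (Suc n) x - V n x) s \<le> TV (Suc n) s - TV n s" for n s
  proof -
    have "T_pi P r (pols n) (V (Suc n)) s \<le> TV (Suc n) s" unfolding TV_def using pol_ok by (rule Tpi_le_Topt)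
    moreover have "TV n s = T_pi P r (pols n) (V n) s" unfolding TV_def greedy ..
    ultimately show ?thesis using Tpi_diff[of P r "pols n" "V (Suc n)" s "V n"] by simp
  qed
  have cnn: "0 \<le> A (Suc n) - A n" for n using Amono[of n] by simp
  have UP: "V (Suc n) s - V n s - (A (Suc n) - A n) * g s \<le> 2 * R * (Bc lam n - lam (Suc n))" for n s
  proof (induction n arbitrary: s)
    case 0
    have "(1 - lam 1) * (TV 0 s - V0 s - (A 0 + 1) * g s) \<le> (1 - lam 1) * (2 * R)"
      using Xb[of 0 s] lamle1[of 1] by (intro mult_left_mono) (auto simp: abs_le_iff)
    thus ?case using I1[of s] by (simp add: algebra_simps)
  next
    case (Suc n)
    have Y: "TV (Suc n) s - TV n s - (A (Suc n) - A n) * g s \<le> 2 * R * (Bc lam n - lam (Suc n))"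
    proof -
      have "P_pi P (pols (Suc n)) (\<lambda>x. V (Suc n) x - V n x - (A (Suc n) - A n) * g x) s \<le> 2 * R * (Bc lam n - lam (Suc n))"
        using mdp pol_ok Suc.IH by (intro Ppi_le) auto
      moreover have "(A (Suc n) - A n) * P_pi P (pols (Suc n)) g s \<le> (A (Suc n) - A n) * g s"
        using cnn[of n] Ppi_g_le[OF bell pol_ok] by (intro mult_left_mono) auto
      ultimately show ?thesis using Yup[of n s] Ppi_split[of P "pols (Suc n)" "V (Suc n)" "V n" s "A (Suc n) - A n" g] by linarith
    qed
    have "(lam (Suc n) - lam (Suc (Suc n))) * (TV (Suc n) s - V0 s - (A (Suc n) + 1) * g s) \<le> (lam (Suc n) - lam (Suc (Suc n))) * (2 * R)"
      using Xb[of "Suc n" s] lammono[of "Suc n"] by (intro mult_left_mono) (auto simp: abs_le_iff)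
    moreover have "(1 - lam (Suc n)) * (TV (Suc n) s - TV n s - (A (Suc n) - A n) * g s) \<le> (1 - lam (Suc n)) * (2 * R * (Bc lam n - lam (Suc n)))"
      using Y lamle1[of "Suc n"] by (intro mult_left_mono) auto
    ultimately have "V (Suc (Suc n)) s - V (Suc n) s - (A (Suc (Suc n)) - A (Suc n)) * g s
       \<le> (lam (Suc n) - lam (Suc (Suc n))) * (2 * R) + (1 - lam (Suc n)) * (2 * R * (Bc lam n - lam (Suc n)))"
      unfolding I2 by linarith
    also have "\<dots> = 2 * R * (Bc lam (Suc n) - lam (Suc (Suc n)))"
      using id_up[of "lam (Suc n)" "lam (Suc (Suc n))" R "Bc lam n"] by simp
    finally show ?case .
  qed
  have YU: "TV (Suc n) s - TV n s - (A (Suc n) - A n) * g s \<le> 2 * R * (Bc lam n - lam (Suc n))" for n s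
  proof -
    have "P_pi P (pols (Suc n)) (\<lambda>x. V (Suc n) x - V n x - (A (Suc n) - A n) * g x) s \<le> 2 * R * (Bc lam n - lam (Suc n))"
      using mdp pol_ok UP by (intro Ppi_le) auto
    moreover have "(A (Suc n) - A n) * P_pi P (pols (Suc n)) g s \<le> (A (Suc n) - A n) * g s"
      using cnn[of n] Ppi_g_le[OF bell pol_ok] by (intro mult_left_mono) auto
    ultimately show ?thesis using Yup[of n s] Ppi_split[of P "pols (Suc n)" "V (Suc n)" "V n" s "A (Suc n) - A n" g] by linarith
  qed
  have LOW1: "- 2 * R * (Bc lam n - lam (Suc n)) - (A (Suc n) - A n) * G \<le> V (Suc n) s - V n s" for n s
  proof (induction n arbitrary: s)
    case 0
    have a: "(1 - lam (Suc 0)) * (- 2 * R - G) \<le> (1 - lam (Suc 0)) * (TV 0 s - V0 s)"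
      using Xb[of 0 s] G0[of s] lamle1[of "Suc 0"] by (intro mult_left_mono) (auto simp: abs_le_iff A0)
    have b: "V (Suc 0) s - V 0 s = (1 - lam (Suc 0)) * (TV 0 s - V0 s)"
      using VS[of 0 s] by (simp add: V0 algebra_simps)
    have A1: "A (Suc 0) - A 0 = 1 - lam (Suc 0)" using AS[of 0] A0 by simp
    have c: "- 2 * R * (Bc lam 0 - lam (Suc 0)) - (A (Suc 0) - A 0) * G = (1 - lam (Suc 0)) * (- 2 * R - G)"
      unfolding A1 by (simp add: algebra_simps)
    show ?case unfolding c b using a .
  next
    case (Suc n)
    have "- 2 * R * (Bc lam n - lam (Suc n)) - (A (Suc n) - A n) * G \<le> P_pi P (pols n) (\<lambda>x. V (Suc n) x - V n x) s"
      using mdp pol_ok Suc.IH by (intro Ppi_ge) auto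
    hence Y: "- 2 * R * (Bc lam n - lam (Suc n)) - (A (Suc n) - A n) * G \<le> TV (Suc n) s - TV n s"
      using Ylo[of n s] by linarith
    have gl: "- ((A (Suc n) + 1) * G) \<le> (A (Suc n) + 1) * g s"
    proof -
      have "(A (Suc n) + 1) * (- G) \<le> (A (Suc n) + 1) * g s"
        using G0[of s] Ann[of "Suc n"] by (intro mult_left_mono) (auto simp: abs_le_iff)
      thus ?thesis by simp
    qed
    have "(lam (Suc n) - lam (Suc (Suc n))) * (- 2 * R - (A (Suc n) + 1) * G) \<le> (lam (Suc n) - lam (Suc (Suc n))) * (TV (Suc n) s - V0 s)"
      using Xb[of "Suc n" s] gl lammono[of "Suc n"] by (intro mult_left_mono) (auto simp: abs_le_iff)
    moreover have "(1 - lam (Suc n)) * (- 2 * R * (Bc lam n - lam (Suc n)) - (A (Suc n) - A n) * G) \<le> (1 - lam (Suc n)) * (TV (Suc n) s - TV n s)"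
      using Y lamle1[of "Suc n"] by (intro mult_left_mono) auto
    ultimately have "(lam (Suc n) - lam (Suc (Suc n))) * (- 2 * R - (A (Suc n) + 1) * G) + (1 - lam (Suc n)) * (- 2 * R * (Bc lam n - lam (Suc n)) - (A (Suc n) - A n) * G)
        \<le> V (Suc (Suc n)) s - V (Suc n) s"
      unfolding I2' by linarith
    moreover have "(lam (Suc n) - lam (Suc (Suc n))) * (- 2 * R - (A (Suc n) + 1) * G) + (1 - lam (Suc n)) * (- 2 * R * (Bc lam n - lam (Suc n)) - (A (Suc n) - A n) * G)
        = - 2 * R * (Bc lam (Suc n) - lam (Suc (Suc n))) - (A (Suc (Suc n)) - A (Suc n)) * G"
      using id_low1[OF AS[of "Suc n"] AS[of n], of R G "Bc lam n"] by simp
    ultimately show ?case by simp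
  qed
  define cK where "cK = (if K = 0 then 0 else A K - A (K - 1))"
  have cK01: "0 \<le> cK" "cK \<le> 1"
    unfolding cK_def using cnn[of "K - 1"] Astep[of "K - 1"] by auto
  have LOW2: "- 2 * R * (Bc lam n - lam (Suc n)) - 2 * cK * G * (\<Prod>j=K..n. (1 - lam j))
      \<le> V (Suc n) s - V n s - (A (Suc n) - A n) * g s" if "K \<le> n" for n s
    using that
  proof (induction n arbitrary: s rule: dec_induct)
    case base
    show ?case
    proof (cases K)
      case 0
      have "(1 - lam 1) * (- 2 * R) \<le> (1 - lam 1) * (TV 0 s - V0 s - (A 0 + 1) * g s)"
        using Xb[of 0 s] lamle1[of 1] by (intro mult_left_mono) (auto simp: abs_le_iff)
      thus ?thesis using I1[of s] by (simp add: 0 cK_def algebra_simps)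
    next
      case (Suc m)
      have "- 2 * R * (Bc lam m - lam (Suc m)) - (A (Suc m) - A m) * G \<le> P_pi P (pols m) (\<lambda>x. V (Suc m) x - V m x) s"
        using mdp pol_ok LOW1 by (intro Ppi_ge) auto
      hence Y0: "- 2 * R * (Bc lam m - lam (Suc m)) - (A (Suc m) - A m) * G \<le> TV (Suc m) s - TV m s"
        using Ylo[of m s] by linarith
      have "(A (Suc m) - A m) * g s \<le> (A (Suc m) - A m) * G"
        using G0[of s] cnn[of m] by (intro mult_left_mono) (auto simp: abs_le_iff)
      hence Y: "- 2 * R * (Bc lam m - lam (Suc m)) - 2 * cK * G \<le> TV (Suc m) s - TV m s - (A (Suc m) - A m) * g s"
      proof -
        have cKe: "cK = A (Suc m) - A m" using Suc by (simp add: cK_def)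
        have "2 * (A (Suc m) - A m) * G = (A (Suc m) - A m) * G + (A (Suc m) - A m) * G" by simp
        thus ?thesis unfolding cKe using Y0 \<open>(A (Suc m) - A m) * g s \<le> (A (Suc m) - A m) * G\<close> by linarith
      qed
      have "(lam (Suc m) - lam (Suc (Suc m))) * (- 2 * R) \<le> (lam (Suc m) - lam (Suc (Suc m))) * (TV (Suc m) s - V0 s - (A (Suc m) + 1) * g s)"
        using Xb[of "Suc m" s] lammono[of "Suc m"] by (intro mult_left_mono) (auto simp: abs_le_iff)
      moreover have "(1 - lam (Suc m)) * (- 2 * R * (Bc lam m - lam (Suc m)) - 2 * cK * G) \<le> (1 - lam (Suc m)) * (TV (Suc m) s - TV m s - (A (Suc m) - A m) * g s)"
        using Y lamle1[of "Suc m"] by (intro mult_left_mono) auto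
      ultimately have "(lam (Suc m) - lam (Suc (Suc m))) * (- 2 * R) + (1 - lam (Suc m)) * (- 2 * R * (Bc lam m - lam (Suc m)) - 2 * cK * G)
          \<le> V (Suc (Suc m)) s - V (Suc m) s - (A (Suc (Suc m)) - A (Suc m)) * g s"
        unfolding I2 by linarith
      moreover have "(lam (Suc m) - lam (Suc (Suc m))) * (- 2 * R) + (1 - lam (Suc m)) * (- 2 * R * (Bc lam m - lam (Suc m)) - 2 * cK * G)
          = - 2 * R * (Bc lam (Suc m) - lam (Suc (Suc m))) - 2 * cK * G * (\<Prod>j=Suc m..Suc m. (1 - lam j))"
        using id_low2[of "lam (Suc m)" "lam (Suc (Suc m))" R "Bc lam m" cK G 1] by simp
      ultimately show ?thesis by (simp add: Suc)
    qed
  next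
    case (step n)
    have "- 2 * R * (Bc lam n - lam (Suc n)) - 2 * cK * G * (\<Prod>j=K..n. (1 - lam j)) \<le> P_pi P (pols n) (\<lambda>x. V (Suc n) x - V n x - (A (Suc n) - A n) * g x) s"
      using mdp pol_ok step.IH by (intro Ppi_ge) auto
    moreover have "P_pi P (pols n) (\<lambda>x. V (Suc n) x - V n x) s = P_pi P (pols n) (\<lambda>x. V (Suc n) x - V n x - (A (Suc n) - A n) * g x) s + (A (Suc n) - A n) * g s"
      using Ppi_split[of P "pols n" "V (Suc n)" "V n" s "A (Suc n) - A n" g] Kg[of n] step.hyps by simp
    ultimately have Y: "- 2 * R * (Bc lam n - lam (Suc n)) - 2 * cK * G * (\<Prod>j=K..n. (1 - lam j)) \<le> TV (Suc n) s - TV n s - (A (Suc n) - A n) * g s"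
      using Ylo[of n s] by linarith
    have "(lam (Suc n) - lam (Suc (Suc n))) * (- 2 * R) \<le> (lam (Suc n) - lam (Suc (Suc n))) * (TV (Suc n) s - V0 s - (A (Suc n) + 1) * g s)"
      using Xb[of "Suc n" s] lammono[of "Suc n"] by (intro mult_left_mono) (auto simp: abs_le_iff)
    moreover have "(1 - lam (Suc n)) * (- 2 * R * (Bc lam n - lam (Suc n)) - 2 * cK * G * (\<Prod>j=K..n. (1 - lam j))) \<le> (1 - lam (Suc n)) * (TV (Suc n) s - TV n s - (A (Suc n) - A n) * g s)"
      using Y lamle1[of "Suc n"] by (intro mult_left_mono) auto
    ultimately have "(lam (Suc n) - lam (Suc (Suc n))) * (- 2 * R) + (1 - lam (Suc n)) * (- 2 * R * (Bc lam n - lam (Suc n)) - 2 * cK * G * (\<Prod>j=K..n. (1 - lam j)))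
        \<le> V (Suc (Suc n)) s - V (Suc n) s - (A (Suc (Suc n)) - A (Suc n)) * g s"
      unfolding I2 by linarith
    moreover have "(\<Prod>j=K..Suc n. (1 - lam j)) = (\<Prod>j=K..n. (1 - lam j)) * (1 - lam (Suc n))"
      using step.hyps by (simp add: prod.cl_ivl_Suc)
    moreover have "(lam (Suc n) - lam (Suc (Suc n))) * (- 2 * R) + (1 - lam (Suc n)) * (- 2 * R * (Bc lam n - lam (Suc n)) - 2 * cK * G * (\<Prod>j=K..n. (1 - lam j)))
        = - 2 * R * (Bc lam (Suc n) - lam (Suc (Suc n))) - 2 * cK * G * ((\<Prod>j=K..n. (1 - lam j)) * (1 - lam (Suc n)))"
      using id_low2[of "lam (Suc n)" "lam (Suc (Suc n))" R "Bc lam n" cK G "\<Prod>j=K..n. (1 - lam j)"] by simp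
    ultimately show ?case by simp
  qed
  fix k s assume kK: "k > K"
  then obtain n where k: "k = Suc n" and nK: "K \<le> n" by (cases k) auto
  have Pnn: "0 \<le> (\<Prod>j=K..n. (1 - lam j))" using lamle1 by (intro prod_nonneg) auto
  have PS: "(\<Prod>j=K..Suc n. (1 - lam j)) = (\<Prod>j=K..n. (1 - lam j)) * (1 - lam (Suc n))"
    using nK by (simp add: prod.cl_ivl_Suc)
  have up: "TV (Suc n) s - V (Suc n) s - g s \<le> 2 * R * Bc lam (Suc n)"
  proof -
    have "lam (Suc n) * (TV (Suc n) s - V0 s - (A (Suc n) + 1) * g s) \<le> lam (Suc n) * (2 * R)"
      using Xb[of "Suc n" s] lamnn[of "Suc n"] by (intro mult_left_mono) (auto simp: abs_le_iff)
    moreover have "(1 - lam (Suc n)) * (TV (Suc n) s - TV n s - (A (Suc n) - A n) * g s) \<le> (1 - lam (Suc n)) * (2 * R * (Bc lam n - lam (Suc n)))"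
      using YU[of n s] lamle1[of "Suc n"] by (intro mult_left_mono) auto
    ultimately have "TV (Suc n) s - V (Suc n) s - g s \<le> lam (Suc n) * (2 * R) + (1 - lam (Suc n)) * (2 * R * (Bc lam n - lam (Suc n)))"
      unfolding I3 by linarith
    also have "\<dots> = 2 * R * Bc lam (Suc n)" using id_fin_up[of "lam (Suc n)" R "Bc lam n"] by simp
    finally show ?thesis .
  qed
  have lo: "- 2 * R * Bc lam (Suc n) - 2 * cK * G * (\<Prod>j=K..Suc n. (1 - lam j)) \<le> TV (Suc n) s - V (Suc n) s - g s"
  proof -
    have "- 2 * R * (Bc lam n - lam (Suc n)) - 2 * cK * G * (\<Prod>j=K..n. (1 - lam j)) \<le> P_pi P (pols n) (\<lambda>x. V (Suc n) x - V n x - (A (Suc n) - A n) * g x) s"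
      using mdp pol_ok LOW2[OF nK] by (intro Ppi_ge) auto
    moreover have "P_pi P (pols n) (\<lambda>x. V (Suc n) x - V n x) s = P_pi P (pols n) (\<lambda>x. V (Suc n) x - V n x - (A (Suc n) - A n) * g x) s + (A (Suc n) - A n) * g s"
      using Ppi_split[of P "pols n" "V (Suc n)" "V n" s "A (Suc n) - A n" g] Kg[of n] nK by simp
    ultimately have Y: "- 2 * R * (Bc lam n - lam (Suc n)) - 2 * cK * G * (\<Prod>j=K..n. (1 - lam j)) \<le> TV (Suc n) s - TV n s - (A (Suc n) - A n) * g s"
      using Ylo[of n s] by linarith
    have "lam (Suc n) * (- 2 * R) \<le> lam (Suc n) * (TV (Suc n) s - V0 s - (A (Suc n) + 1) * g s)"
      using Xb[of "Suc n" s] lamnn[of "Suc n"] by (intro mult_left_mono) (auto simp: abs_le_iff)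
    moreover have "(1 - lam (Suc n)) * (- 2 * R * (Bc lam n - lam (Suc n)) - 2 * cK * G * (\<Prod>j=K..n. (1 - lam j))) \<le> (1 - lam (Suc n)) * (TV (Suc n) s - TV n s - (A (Suc n) - A n) * g s)"
      using Y lamle1[of "Suc n"] by (intro mult_left_mono) auto
    ultimately have "lam (Suc n) * (- 2 * R) + (1 - lam (Suc n)) * (- 2 * R * (Bc lam n - lam (Suc n)) - 2 * cK * G * (\<Prod>j=K..n. (1 - lam j))) \<le> TV (Suc n) s - V (Suc n) s - g s"
      unfolding I3 by linarith
    moreover have "lam (Suc n) * (- 2 * R) + (1 - lam (Suc n)) * (- 2 * R * (Bc lam n - lam (Suc n)) - 2 * cK * G * (\<Prod>j=K..n. (1 - lam j)))
       = - 2 * R * Bc lam (Suc n) - 2 * cK * G * (\<Prod>j=K..Suc n. (1 - lam j))"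
      unfolding PS using id_fin_lo[of "lam (Suc n)" R "Bc lam n" cK G "\<Prod>j=K..n. (1 - lam j)"] by simp
    ultimately show ?thesis by simp
  qed
  have "cK * (G * (\<Prod>j=K..Suc n. (1 - lam j))) \<le> 1 * (G * (\<Prod>j=K..Suc n. (1 - lam j)))"
    using cK01 Gnn Pnn lamle1[of "Suc n"] unfolding PS by (intro mult_right_mono mult_nonneg_nonneg) auto
  hence "2 * cK * G * (\<Prod>j=K..Suc n. (1 - lam j)) \<le> 2 * (\<Prod>j=K..Suc n. (1 - lam j)) * G" by (simp add: algebra_simps)
  moreover have "0 \<le> 2 * cK * G * (\<Prod>j=K..Suc n. (1 - lam j))"
    using cK01 Gnn Pnn lamle1[of "Suc n"] unfolding PS by (intro mult_nonneg_nonneg) auto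
  ultimately show "\<bar>T_opt P r (V k) s - V k s - g s\<bar>
      \<le> 2 * Bc lam k * supnorm (\<lambda>s. V0 s - h s) + 2 * (\<Prod>j=K..k. (1 - lam j)) * supnorm g"
    using up lo unfolding k TV_def[symmetric] R_def[symmetric] G_def[symmetric] by (simp add: abs_le_iff algebra_simps)
qed



theorem theorem10:
  fixes P :: "'s::finite \<Rightarrow> 'a::finite \<Rightarrow> 's \<Rightarrow> real"
    and r :: "'s \<Rightarrow> 'a \<Rightarrow> real"
    and g h V0 :: "'s \<Rightarrow> real"
    and lam :: "nat \<Rightarrow> real"
    and V :: "nat \<Rightarrow> 's \<Rightarrow> real"
    and pols :: "nat \<Rightarrow> 's \<Rightarrow> 'a \<Rightarrow> real"
  assumes mdp: "is_mdp P"
    and bell: "modified_bellman P r g h"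
    and lam0: "lam 0 = 1"
    and lam_mono: "\<And>k. k \<ge> 1 \<Longrightarrow> lam (Suc k) \<le> lam k"
    and lam_lt1: "\<And>k. k \<ge> 1 \<Longrightarrow> lam k < 1"
    and lam_lim: "lam \<longlonglongrightarrow> 0"
    and V0: "V 0 = V0"
    and Vrec: "\<And>k. k \<ge> 1 \<Longrightarrow> V k = (\<lambda>s. lam k * V0 s + (1 - lam k) * T_opt P r (V (k - 1)) s)"
    and pol_ok: "\<And>k. is_policy (pols k)"
    and greedy: "\<And>k. T_pi P r (pols k) (V k) = T_opt P r (V k)"
  shows "(\<exists>K::nat. \<forall>k\<ge>K. P_pi P (pols k) g = g) \<and>
         (let K = (LEAST K::nat. \<forall>k\<ge>K. P_pi P (pols k) g = g) in
          \<forall>k>K.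
            supnorm (\<lambda>s. g s - gain P r (pols k) s)
              \<le> supnorm (\<lambda>s. T_opt P r (V k) s - V k s - g s) \<and>
            supnorm (\<lambda>s. T_opt P r (V k) s - V k s - g s)
              \<le> 2 * (1 - (\<Sum>i=1..k. lam i * (\<Prod>j=i..k. (1 - lam j)))) * supnorm (\<lambda>s. V0 s - h s)
                + 2 * (\<Prod>j=K..k. (1 - lam j)) * supnorm g)"
proof -
  have lamle1: "lam n \<le> 1" for n
    using lam0 lam_lt1[of n] by (cases n) auto
  have lammono: "lam (Suc n) \<le> lam n" for n
    using lam0 lam_lt1[of 1] lam_mono[of n] by (cases n) auto
  have dec: "decseq lam" using lammono by (rule decseq_SucI)
  have lamnn: "0 \<le> lam n" for n
  proof -
    have "\<forall>m\<ge>n. lam m \<le> lam n" using dec by (auto intro: decseqD)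
    thus ?thesis using lam_lim by (intro LIMSEQ_le_const2[of lam 0 "lam n"]) auto
  qed
  have Vs: "V (Suc n) = (\<lambda>s. lam (Suc n) * V0 s + (1 - lam (Suc n)) * T_opt P r (V n) s)" for n
    using Vrec[of "Suc n"] by simp
  define A where "A = acoef lam"
  define R where "R = supnorm (\<lambda>s. V0 s - h s)"
  have Ann: "0 \<le> A n" for n unfolding A_def using lamle1 by (rule acoef_nonneg)
  have Amono: "A n \<le> A (Suc n)" for n unfolding A_def using lamle1 lammono by (rule acoef_mono)
  have incA: "incseq A" using Amono by (rule incseq_SucI)
  have AS: "A (Suc n) = (1 - lam (Suc n)) * (A n + 1)" for n unfolding A_def by simp
  have R0: "\<bar>V0 s - h s\<bar> \<le> R" for s unfolding R_def by (rule abs_le_supnorm)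
  have E: "\<bar>V n s - (h s + A n * g s)\<bar> \<le> R" for n s
  proof (induction n arbitrary: s)
    case 0 thus ?case using R0 by (simp add: V0 A_def)
  next
    case (Suc n)
    have "\<bar>T_opt P r (V n) s - T_opt P r (\<lambda>x. h x + A n * g x) s\<bar> \<le> R"
      using mdp Suc.IH by (intro Topt_nonexp) auto
    hence t: "\<bar>T_opt P r (V n) s - (h s + (A n + 1) * g s)\<bar> \<le> R"
      using Topt_shift[OF bell mdp Ann[of n]] by simp
    have eq: "V (Suc n) s - (h s + A (Suc n) * g s) = lam (Suc n) * (V0 s - h s) + (1 - lam (Suc n)) * (T_opt P r (V n) s - (h s + (A n + 1) * g s))"
      unfolding Vs AS by (simp add: algebra_simps)
    show ?case unfolding eq using lamnn[of "Suc n"] lamle1[of "Suc n"] R0[of s] t by (intro conv_abs) auto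
  qed
  have Aunb: "\<exists>n. M < A n" for M
  proof (rule ccontr)
    assume "\<not> (\<exists>n. M < A n)"
    hence "\<forall>n. A n \<le> M" by (simp add: not_less)
    then obtain L where L: "A \<longlonglongrightarrow> L" using incseq_convergent[OF incA] by blast
    have "(\<lambda>n. A (Suc n)) \<longlonglongrightarrow> L" using L by (rule LIMSEQ_Suc)
    moreover have "(\<lambda>n. (1 - lam (Suc n)) * (A n + 1)) \<longlonglongrightarrow> (1 - 0) * (L + 1)"
      by (intro tendsto_intros LIMSEQ_Suc lam_lim L)
    ultimately have "L = (1 - 0) * (L + 1)" unfolding AS by (rule LIMSEQ_unique)
    thus False by simp
  qed
  obtain d where d: "\<And>s. (\<Sum>s'\<in>UNIV. P s (d s) s' * g s') = g s"
     "\<And>s. r s (d s) + (\<Sum>s'\<in>UNIV. P s (d s) s' * h s') = h s + g s"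
    using bell_facts(3)[OF bell] by blast
  define Pg where "Pg s a = (\<Sum>s'\<in>UNIV. P s a s' * g s')" for s a
  have Pgle: "Pg s a \<le> g s" for s a unfolding Pg_def by (rule bell_facts(1)[OF bell])
  define B where "B = {(s, a). Pg s a < g s}"
  have Kex: "\<exists>K::nat. \<forall>k\<ge>K. P_pi P (pols k) g = g"
  proof (cases "B = {}")
    case True
    have "P_pi P (pols k) g = g" for k
    proof
      fix s
      have "Pg s a = g s" for a
      proof -
        have "(s, a) \<notin> B" using True by simp
        hence "\<not> Pg s a < g s" unfolding B_def by simp
        thus ?thesis using Pgle[of s a] by linarith
      qed
      hence "P_pi P (pols k) g s = (\<Sum>a\<in>UNIV. pols k s a * g s)" unfolding Ppi_eq Pg_def[symmetric] by simp
      also have "\<dots> = g s" using pol_ok[of k] by (simp add: is_policy_def sum_distrib_right[symmetric])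
      finally show "P_pi P (pols k) g s = g s" .
    qed
    thus ?thesis by blast
  next
    case False
    define eps where "eps = Min ((\<lambda>(s, a). g s - Pg s a) ` B)"
    have finB: "finite B" by simp
    have epsle: "eps \<le> g s - Pg s a" if "(s, a) \<in> B" for s a
      unfolding eps_def using finB that by (intro Min_le) force+
    have epspos: "0 < eps"
      unfolding eps_def using finB False by (subst Min_gr_iff) (auto simp: B_def)
    obtain N where N: "2 * R / eps < A N" using Aunb by blast
    have "P_pi P (pols k) g = g" if kN: "k \<ge> N" for k
    proof
      fix s
      have AkN: "A N \<le> A k" using incA kN by (rule incseqD)
      have "2 * R < A N * eps" using N epspos by (simp add: pos_divide_less_eq)
      moreover have "A N * eps \<le> A k * eps" using AkN epspos by (intro mult_right_mono) auto
      ultimately have Aeps: "2 * R < A k * eps" by linarith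
      define e where "e x = V k x - (h x + A k * g x)" for x
      have eb: "\<bar>e x\<bar> \<le> R" for x unfolding e_def by (rule E)
      define Q where "Q a = Qf P r (V k) s a" for a
      have Qeq: "Q a = (r s a + (\<Sum>s'\<in>UNIV. P s a s' * h s')) + A k * Pg s a + (\<Sum>s'\<in>UNIV. P s a s' * e s')" for a
      proof -
        have "(\<Sum>s'\<in>UNIV. P s a s' * V k s') = (\<Sum>s'\<in>UNIV. P s a s' * h s' + A k * (P s a s' * g s') + P s a s' * e s')"
          by (rule sum.cong) (auto simp: e_def algebra_simps)
        also have "\<dots> = (\<Sum>s'\<in>UNIV. P s a s' * h s') + A k * Pg s a + (\<Sum>s'\<in>UNIV. P s a s' * e s')"
          unfolding Pg_def by (simp only: sum.distrib sum_distrib_left)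
        finally show ?thesis unfolding Q_def Qf_def by simp
      qed
      have Pe: "\<bar>\<Sum>s'\<in>UNIV. P s a s' * e s'\<bar> \<le> R" for a
      proof -
        have "(\<Sum>s'\<in>UNIV. P s a s' * e s') \<le> R" using mdp eb by (intro Pa_le) (auto simp: abs_le_iff)
        moreover have "- R \<le> (\<Sum>s'\<in>UNIV. P s a s' * e s')"
        proof (intro Pa_ge[OF mdp])
          fix s' show "- R \<le> e s'" using eb[of s'] by (simp add: abs_le_iff)
        qed
        ultimately show ?thesis by simp
      qed
      have Qbad: "Q a < Q (d s)" if aB: "(s, a) \<in> B" for a
      proof -
        have "A k * Pg s a \<le> A k * (g s - eps)" using epsle[OF aB] Ann[of k] by (intro mult_left_mono) auto
        hence "Q a \<le> h s + g s + A k * (g s - eps) + R"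
          using Qeq[of a] bell_facts(2)[OF bell, of s a] Pe[of a] by linarith
        moreover have "Q (d s) \<ge> h s + g s + A k * g s - R"
        proof -
          have "Q (d s) = h s + g s + A k * g s + (\<Sum>s'\<in>UNIV. P s (d s) s' * e s')"
            using Qeq[of "d s"] by (simp add: Pg_def d)
          thus ?thesis using Pe[of "d s"] by linarith
        qed
        ultimately show ?thesis using Aeps by (simp add: algebra_simps)
      qed
      define Mx where "Mx = T_opt P r (V k) s"
      have QMx: "Q a \<le> Mx" for a unfolding Q_def Mx_def Topt_Qf by (rule Max_ge) auto
      have sumQ: "(\<Sum>a\<in>UNIV. pols k s a * Q a) = Mx"
        using greedy[of k] Tpi_eq[of P r "pols k" "V k" s] unfolding Mx_def Q_def by simp
      have "(\<Sum>a\<in>UNIV. pols k s a * (Mx - Q a)) = (\<Sum>a\<in>UNIV. pols k s a) * Mx - (\<Sum>a\<in>UNIV. pols k s a * Q a)"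
        by (simp add: right_diff_distrib sum_subtractf sum_distrib_right)
      also have "\<dots> = 0" using pol_ok[of k] sumQ by (simp add: is_policy_def)
      finally have sum0: "(\<Sum>a\<in>UNIV. pols k s a * (Mx - Q a)) = 0" .
      have nn: "0 \<le> pols k s a * (Mx - Q a)" for a
        using pol_ok[of k] QMx[of a] by (simp add: is_policy_def)
      have zero: "pols k s a * (Mx - Q a) = 0" for a
        using sum0 nn by (simp add: sum_nonneg_eq_0_iff)
      have polz: "pols k s a = 0" if "(s, a) \<in> B" for a
      proof -
        have "Q a < Mx" using Qbad[OF that] QMx[of "d s"] by linarith
        thus ?thesis using zero[of a] by simp
      qed
      have pe: "pols k s a * Pg s a = pols k s a * g s" for a
      proof (cases "(s, a) \<in> B")
        case True thus ?thesis using polz by simp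
      next
        case False thus ?thesis using Pgle[of s a] unfolding B_def by simp
      qed
      have "P_pi P (pols k) g s = (\<Sum>a\<in>UNIV. pols k s a * Pg s a)" unfolding Ppi_eq Pg_def ..
      also have "\<dots> = (\<Sum>a\<in>UNIV. pols k s a * g s)" using pe by (intro sum.cong) auto
      finally have "P_pi P (pols k) g s = (\<Sum>a\<in>UNIV. pols k s a * g s)" .
      also have "\<dots> = g s" using pol_ok[of k] by (simp add: is_policy_def sum_distrib_right[symmetric])
      finally show "P_pi P (pols k) g s = g s" .
    qed
    thus ?thesis by blast
  qed
  define K where "K = (LEAST K::nat. \<forall>k\<ge>K. P_pi P (pols k) g = g)"
  have Kg: "\<And>k. k \<ge> K \<Longrightarrow> P_pi P (pols k) g = g"
    using LeastI_ex[OF Kex] unfolding K_def by blast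
  have MB: "\<And>k s. k > K \<Longrightarrow> \<bar>T_opt P r (V k) s - V k s - g s\<bar>
      \<le> 2 * Bc lam k * supnorm (\<lambda>s. V0 s - h s) + 2 * (\<Prod>j=K..k. (1 - lam j)) * supnorm g"
    by (rule main_bounds[OF mdp bell lam0 lamle1 lamnn lammono V0 Vs pol_ok greedy Kg])
  have part2: "supnorm (\<lambda>s. g s - gain P r (pols k) s) \<le> supnorm (\<lambda>s. T_opt P r (V k) s - V k s - g s) \<and>
            supnorm (\<lambda>s. T_opt P r (V k) s - V k s - g s)
              \<le> 2 * (1 - (\<Sum>i=1..k. lam i * (\<Prod>j=i..k. (1 - lam j)))) * supnorm (\<lambda>s. V0 s - h s)
                + 2 * (\<Prod>j=K..k. (1 - lam j)) * supnorm g" if kK: "k > K" for k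
  proof
    show "supnorm (\<lambda>s. g s - gain P r (pols k) s) \<le> supnorm (\<lambda>s. T_opt P r (V k) s - V k s - g s)"
    proof (rule supnorm_le)
      fix s
      show "\<bar>g s - gain P r (pols k) s\<bar> \<le> supnorm (\<lambda>s. T_opt P r (V k) s - V k s - g s)"
      proof (rule gain_bound[OF mdp pol_ok])
        show "P_pi P (pols k) g = g" using Kg kK by simp
        show "T_pi P r (pols k) (V k) s' = V k s' + g s' + (T_opt P r (V k) s' - V k s' - g s')" for s'
          using greedy[of k] by simp
        show "\<bar>T_opt P r (V k) s' - V k s' - g s'\<bar> \<le> supnorm (\<lambda>s. T_opt P r (V k) s - V k s - g s)" for s'
          by (rule abs_le_supnorm[where v="\<lambda>s. T_opt P r (V k) s - V k s - g s"])
      qed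
    qed
    show "supnorm (\<lambda>s. T_opt P r (V k) s - V k s - g s)
              \<le> 2 * (1 - (\<Sum>i=1..k. lam i * (\<Prod>j=i..k. (1 - lam j)))) * supnorm (\<lambda>s. V0 s - h s)
                + 2 * (\<Prod>j=K..k. (1 - lam j)) * supnorm g"
      using MB[OF kK] unfolding Bc_closed by (intro supnorm_le) auto
  qed
  show ?thesis using Kex part2 unfolding K_def Let_def by blast
qed


end
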